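(* Let $p\ge2$ be an integer and let $G$ be a graph. If $G=H\cup I$ where $H$ is a subgraph of $G$ and $I$ is an induced subgraph of $G$ (so $V(G)=V(H)\cup V(I)$ and $E(G)=E(H)\cup E(I)$), then $\mathrm{id}^{\leq p}(G)\leq \mathrm{id}^{\leq p}(H)+\mathrm{id}^{\leq p}(I)$.
   Context: All graphs are finite and simple. For an oriented graph $D$ and $X\subseteq V(D)$, the inversion of $X$ reverses every arc with both endvertices in $X$; a $(\leq p)$-inversion is the inversion of a set of at most $p$ vertices. $\mathrm{id}^{\leq p}(G)$ is the maximum, over all ordered pairs $(\vec G_1,\vec G_2)$ of orientations of $G$, of the minimum number of $(\leq p)$-inversions transforming $\vec G_1$ into $\vec G_2$. *)

theory Defs
  imports Main
begin

definition graph :: "'a set \<Rightarrow> 'a set set \<Rightarrow> bool" where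
  "graph V E \<longleftrightarrow> finite V \<and> (\<forall>e\<in>E. e \<subseteq> V \<and> card e = 2)"

definition orientation :: "'a set \<Rightarrow> 'a set set \<Rightarrow> ('a \<times> 'a) set \<Rightarrow> bool" where
  "orientation V E A \<longleftrightarrow>
     (\<forall>(u,v)\<in>A. {u,v} \<in> E) \<and>
     (\<forall>u v. {u,v} \<in> E \<and> u \<noteq> v \<longrightarrow> ((u,v) \<in> A \<longleftrightarrow> (v,u) \<notin> A))"

definition invert :: "'a set \<Rightarrow> ('a \<times> 'a) set \<Rightarrow> ('a \<times> 'a) set" where
  "invert X A = {(u,v). (u,v) \<in> A \<and> \<not> (u \<in> X \<and> v \<in> X)}
              \<union> {(v,u) | u v. (u,v) \<in> A \<and> u \<in> X \<and> v \<in> X}"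

definition invert_seq :: "'a set list \<Rightarrow> ('a \<times> 'a) set \<Rightarrow> ('a \<times> 'a) set" where
  "invert_seq Xs A = foldl (\<lambda>B X. invert X B) A Xs"

definition inv_dist :: "nat \<Rightarrow> 'a set \<Rightarrow> ('a \<times> 'a) set \<Rightarrow> ('a \<times> 'a) set \<Rightarrow> nat" where
  "inv_dist p V A1 A2 = (LEAST k. \<exists>Xs. length Xs = k \<and>
      (\<forall>X\<in>set Xs. X \<subseteq> V \<and> card X \<le> p) \<and> invert_seq Xs A1 = A2)"

definition id_le :: "nat \<Rightarrow> 'a set \<Rightarrow> 'a set set \<Rightarrow> nat" where
  "id_le p V E = Max {inv_dist p V A1 A2 | A1 A2. orientation V E A1 \<and> orientation V E A2}"

end

theory Submission
  imports Defs
begin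

definition restr :: "'a set set \<Rightarrow> ('a \<times> 'a) set \<Rightarrow> ('a \<times> 'a) set" where
  "restr F A = {(u,v). (u,v) \<in> A \<and> {u,v} \<in> F}"

lemma restr_invert: "restr F (invert X A) = invert X (restr F A)"
  unfolding restr_def invert_def by (auto simp: insert_commute)

lemma invert_seq_snoc: "invert_seq (xs @ [x]) A = invert x (invert_seq xs A)"
  unfolding invert_seq_def by simp

lemma invert_seq_append: "invert_seq (xs @ ys) A = invert_seq ys (invert_seq xs A)"
  unfolding invert_seq_def by simp

lemma restr_invert_seq: "restr F (invert_seq Xs A) = invert_seq Xs (restr F A)"
proof (induction Xs rule: rev_induct)
  case Nil then show ?case by (simp add: invert_seq_def)
next
  case (snoc x xs)
  then show ?case by (simp add: invert_seq_snoc restr_invert)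
qed

lemma restr_invert_out: "(\<forall>e\<in>F. \<not> e \<subseteq> Y) \<Longrightarrow> restr F (invert Y A) = restr F A"
  unfolding restr_def invert_def by (auto simp: insert_commute)

lemma restr_invert_seq_out: "(\<forall>Y\<in>set Ys. \<forall>e\<in>F. \<not> e \<subseteq> Y) \<Longrightarrow> restr F (invert_seq Ys A) = restr F A"
proof (induction Ys rule: rev_induct)
  case Nil then show ?case by (simp add: invert_seq_def)
next
  case (snoc x xs)
  then show ?case by (simp add: invert_seq_snoc restr_invert_out)
qed

lemma invert_orient: "orientation V E A \<Longrightarrow> orientation V E (invert X A)"
  unfolding orientation_def invert_def by (auto simp: insert_commute)

lemma invert_seq_orient: "orientation V E A \<Longrightarrow> orientation V E (invert_seq Xs A)"
proof (induction Xs rule: rev_induct)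
  case Nil then show ?case by (simp add: invert_seq_def)
next
  case (snoc x xs)
  then show ?case by (simp add: invert_seq_snoc invert_orient)
qed

lemma restr_orient: "orientation V E A \<Longrightarrow> F \<subseteq> E \<Longrightarrow> orientation V' F (restr F A)"
  unfolding orientation_def restr_def by (auto simp: insert_commute)

lemma restr_orient_self: "orientation V E A \<Longrightarrow> restr E A = A"
  unfolding orientation_def restr_def by auto

lemma invert_seq_parity:
  "((u,v) \<in> invert_seq Xs A) = (if odd (length (filter (\<lambda>X. u \<in> X \<and> v \<in> X) Xs)) then (v,u) \<in> A else (u,v) \<in> A)"
proof (induction Xs arbitrary: u v rule: rev_induct)
  case Nil then show ?case by (simp add: invert_seq_def)
next
  case (snoc x xs)
  have c: "(\<lambda>X. v \<in> X \<and> u \<in> X) = (\<lambda>X. u \<in> X \<and> v \<in> X)" by auto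
  show ?case
    unfolding invert_seq_snoc using c
    by (simp add: invert_def snoc.IH) (auto simp: snoc.IH c)
qed


lemma orD: "orientation V E A \<Longrightarrow> (u,v) \<in> A \<Longrightarrow> {u,v} \<in> E"
  unfolding orientation_def by blast

lemma orE: "orientation V E A \<Longrightarrow> {u,v} \<in> E \<Longrightarrow> u \<noteq> v \<Longrightarrow> ((u,v) \<in> A) = ((v,u) \<notin> A)"
  unfolding orientation_def by blast

lemma restr_restr: "restr F (restr G A) = restr (F \<inter> G) A"
  unfolding restr_def by auto

lemma restr_Un: "restr (F \<union> G) A = restr F A \<union> restr G A"
  unfolding restr_def by auto

lemma orient_exists:
  assumes "graph V E" shows "\<exists>A. orientation V E A"
proof -
  from assms have "finite V" by (simp add: graph_def)
  then obtain f :: "'a \<Rightarrow> nat" and n where inj: "inj_on f V"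
    using finite_imp_inj_to_nat_seg by blast
  define A where "A = {(u,v). {u,v} \<in> E \<and> f u < f v}"
  have "orientation V E A"
    unfolding orientation_def
  proof (intro conjI allI impI)
    show "\<forall>(u, v)\<in>A. {u, v} \<in> E" by (auto simp: A_def)
  next
    fix u v assume h: "{u, v} \<in> E \<and> u \<noteq> v"
    then have "u \<in> V" "v \<in> V" using assms by (auto simp: graph_def)
    then have "f u \<noteq> f v" using h inj by (auto dest: inj_onD)
    then show "((u, v) \<in> A) = ((v, u) \<notin> A)" using h by (auto simp: A_def insert_commute)
  qed
  then show ?thesis by blast
qed

lemma finite_orients:
  assumes "graph V E" shows "finite {A. orientation V E A}"
proof -
  have "{A. orientation V E A} \<subseteq> Pow (V \<times> V)"
    using assms unfolding graph_def orientation_def by fastforce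
  moreover have "finite (V \<times> V)" using assms by (simp add: graph_def)
  ultimately show ?thesis by (meson finite_Pow_iff finite_subset)
qed

lemma finite_vals:
  assumes "graph V E"
  shows "finite {inv_dist p V A1 A2 | A1 A2. orientation V E A1 \<and> orientation V E A2}"
proof -
  have "{inv_dist p V A1 A2 | A1 A2. orientation V E A1 \<and> orientation V E A2}
     \<subseteq> (\<lambda>(a,b). inv_dist p V a b) ` ({A. orientation V E A} \<times> {A. orientation V E A})"
    by auto
  then show ?thesis using finite_orients[OF assms] by (meson finite_SigmaI finite_imageI finite_subset)
qed

lemma exists_seq:
  assumes g: "graph V E" and p: "p \<ge> 2" and o1: "orientation V E B1" and o2: "orientation V E B2"
  shows "\<exists>Xs. (\<forall>X\<in>set Xs. X \<subseteq> V \<and> card X \<le> p) \<and> invert_seq Xs B1 = B2"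
proof -
  define D where "D = {e\<in>E. \<exists>u v. e = {u,v} \<and> (u,v) \<in> B1 \<and> (u,v) \<notin> B2}"
  have "finite E"
  proof -
    have "E \<subseteq> Pow V" using g by (auto simp: graph_def)
    then show ?thesis using g by (simp add: graph_def finite_subset)
  qed
  then have "finite D" by (simp add: D_def)
  then obtain xs where xs: "set xs = D" "distinct xs" using finite_distinct_list by blast
  have sub: "\<forall>X\<in>set xs. X \<subseteq> V \<and> card X \<le> p"
  proof
    fix X assume "X \<in> set xs"
    then have "X \<in> E" using xs(1) by (simp add: D_def)
    then show "X \<subseteq> V \<and> card X \<le> p" using g p by (simp add: graph_def)
  qed
  have key: "(a,b) \<in> invert_seq xs B1 \<longleftrightarrow> (a,b) \<in> B2" for a b
  proof (cases "a = b")
    case True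
    have "{a} \<notin> E"
    proof
      assume "{a} \<in> E"
      then have "card {a} = 2" using g by (simp add: graph_def)
      then show False by simp
    qed
    then have "(a,a) \<notin> B1" "(a,a) \<notin> B2" using orD[OF o1, of a a] orD[OF o2, of a a] by auto
    then show ?thesis using True by (simp add: invert_seq_parity)
  next
    case False
    have len: "length (filter (\<lambda>X. a \<in> X \<and> b \<in> X) xs) = card ({X. a \<in> X \<and> b \<in> X} \<inter> D)"
      using xs by (simp add: distinct_length_filter)
    have setq: "{X. a \<in> X \<and> b \<in> X} \<inter> D = (if {a,b} \<in> D then {{a,b}} else {})"
    proof -
      have eq: "X = {a,b}" if "X \<in> D" "a \<in> X" "b \<in> X" for X
      proof -
        have "X \<in> E" using that(1) by (simp add: D_def)
        then have "card X = 2" using g by (simp add: graph_def)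
        then obtain x y where "X = {x,y}" "x \<noteq> y" by (auto simp: card_2_iff)
        then show ?thesis using that False by auto
      qed
      show ?thesis
      proof (cases "{a,b} \<in> D")
        case True
        then show ?thesis using eq by (simp only: if_True) blast
      next
        case False
        then show ?thesis using eq by (simp only: if_False) blast
      qed
    qed
    show ?thesis
    proof (cases "{a,b} \<in> D")
      case True
      then have odd: "odd (length (filter (\<lambda>X. a \<in> X \<and> b \<in> X) xs))" using len setq by simp
      from True obtain u v where uv: "{a,b} = {u,v}" "(u,v) \<in> B1" "(u,v) \<notin> B2" "{a,b} \<in> E"
        by (auto simp: D_def)
      have E': "{b,a} \<in> E" using uv(4) by (simp add: insert_commute)
      have e1: "((a,b) \<in> B1) = ((b,a) \<notin> B1)" using orE[OF o1 uv(4) False] .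
      have e2: "((a,b) \<in> B2) = ((b,a) \<notin> B2)" using orE[OF o2 uv(4) False] .
      have "(u = a \<and> v = b) \<or> (u = b \<and> v = a)" using uv(1) by (simp add: doubleton_eq_iff) blast
      then have "((b,a) \<in> B1) = ((a,b) \<in> B2)"
        using uv(2,3) e1 e2 by blast
      then show ?thesis using odd by (simp add: invert_seq_parity)
    next
      case nD: False
      then have ev: "even (length (filter (\<lambda>X. a \<in> X \<and> b \<in> X) xs))" using len setq by simp
      have "((a,b) \<in> B1) = ((a,b) \<in> B2)"
      proof (cases "{a,b} \<in> E")
        case True
        have E': "{b,a} \<in> E" using True by (simp add: insert_commute)
        have n1: "\<not> ((a,b) \<in> B1 \<and> (a,b) \<notin> B2)" using nD True by (auto simp: D_def)
        have n2: "\<not> ((b,a) \<in> B1 \<and> (b,a) \<notin> B2)" using nD True by (auto simp: D_def insert_commute)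
        have e1: "((a,b) \<in> B1) = ((b,a) \<notin> B1)" using orE[OF o1 True False] .
        have e2: "((a,b) \<in> B2) = ((b,a) \<notin> B2)" using orE[OF o2 True False] .
        show ?thesis using n1 n2 e1 e2 by blast
      next
        case F: False
        then show ?thesis using orD[OF o1, of a b] orD[OF o2, of a b] by blast
      qed
      then show ?thesis using ev by (simp add: invert_seq_parity)
    qed
  qed
  have "invert_seq xs B1 = B2" using key by auto
  then show ?thesis using sub by blast
qed

lemma bound:
  assumes g: "graph V E" and p: "p \<ge> 2" and o1: "orientation V E B1" and o2: "orientation V E B2"
  shows "\<exists>Xs. length Xs \<le> id_le p V E \<and> (\<forall>X\<in>set Xs. X \<subseteq> V \<and> card X \<le> p) \<and> invert_seq Xs B1 = B2"
proof -
  let ?P = "\<lambda>k. \<exists>Xs. length Xs = k \<and> (\<forall>X\<in>set Xs. X \<subseteq> V \<and> card X \<le> p) \<and> invert_seq Xs B1 = B2"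
  have "\<exists>k. ?P k" using exists_seq[OF assms] by blast
  then have "?P (Least ?P)" by (rule LeastI_ex)
  then have P: "?P (inv_dist p V B1 B2)" by (simp add: inv_dist_def)
  have "inv_dist p V B1 B2 \<le> id_le p V E"
    unfolding id_le_def
    by (rule Max_ge[OF finite_vals[OF g]]) (use o1 o2 in blast)
  moreover obtain Xs where "length Xs = inv_dist p V B1 B2"
    "\<forall>X\<in>set Xs. X \<subseteq> V \<and> card X \<le> p" "invert_seq Xs B1 = B2" using P by blast
  ultimately show ?thesis by (intro exI[of _ Xs]) simp
qed

theorem mainTheorem12:
  fixes p :: nat and V VH VI :: "'a set" and E EH EI :: "'a set set"
  assumes "p \<ge> 2"
    and "graph V E"
    and "graph VH EH" and "VH \<subseteq> V" and "EH \<subseteq> E"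
    and "VI \<subseteq> V" and "EI = {e \<in> E. e \<subseteq> VI}"
    and "V = VH \<union> VI" and "E = EH \<union> EI"
  shows "id_le p V E \<le> id_le p VH EH + id_le p VI EI"
proof -
  note p = assms(1) and g = assms(2) and gH = assms(3)
  have gI: "graph VI EI" using assms(2,6,7) finite_subset by (auto simp: graph_def)
  have EIE: "EI \<subseteq> E" using assms(7) by auto
  have main: "inv_dist p V A1 A2 \<le> id_le p VH EH + id_le p VI EI"
    if o1: "orientation V E A1" and o2: "orientation V E A2" for A1 A2
  proof -
    have h1: "orientation VH EH (restr EH A1)" "orientation VH EH (restr EH A2)"
      using restr_orient[OF o1 assms(5)] restr_orient[OF o2 assms(5)] by auto
    obtain Xs where Xs: "length Xs \<le> id_le p VH EH" "\<forall>X\<in>set Xs. X \<subseteq> VH \<and> card X \<le> p"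
      "invert_seq Xs (restr EH A1) = restr EH A2"
      using bound[OF gH p h1] by blast
    define D where "D = invert_seq Xs A1"
    have oD: "orientation V E D" using invert_seq_orient[OF o1] by (simp add: D_def)
    have DH: "restr EH D = restr EH A2" using Xs(3) by (simp add: D_def restr_invert_seq)
    have i1: "orientation VI EI (restr EI D)" "orientation VI EI (restr EI A2)"
      using restr_orient[OF oD EIE] restr_orient[OF o2 EIE] by auto
    obtain Ys where Ys: "length Ys \<le> id_le p VI EI" "\<forall>X\<in>set Ys. X \<subseteq> VI \<and> card X \<le> p"
      "invert_seq Ys (restr EI D) = restr EI A2"
      using bound[OF gI p i1] by blast
    define F where "F = invert_seq Ys D"
    have oF: "orientation V E F" using invert_seq_orient[OF oD] by (simp add: F_def)
    have FI: "restr EI F = restr EI A2" using Ys(3) by (simp add: F_def restr_invert_seq)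
    have out: "\<forall>Y\<in>set Ys. \<forall>e\<in>E - EI. \<not> e \<subseteq> Y" using Ys(2) assms(7) by blast
    have FO: "restr (E - EI) F = restr (E - EI) D"
      unfolding F_def by (rule restr_invert_seq_out[OF out])
    have "restr (E - EI) D = restr (E - EI) (restr EH D)"
      using assms(9) by (simp add: restr_restr Int_absorb2 Diff_subset_conv Un_commute)
    also have "\<dots> = restr (E - EI) A2"
      using assms(9) by (simp add: DH restr_restr Int_absorb2 Diff_subset_conv Un_commute)
    finally have FO2: "restr (E - EI) F = restr (E - EI) A2" using FO by simp
    have EU: "E = EI \<union> (E - EI)" using EIE by auto
    have "F = restr E F" using restr_orient_self[OF oF] by simp
    also have "\<dots> = restr (EI \<union> (E - EI)) F" by (simp only: EU[symmetric])
    also have "\<dots> = restr EI F \<union> restr (E - EI) F" by (rule restr_Un)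
    also have "\<dots> = restr EI A2 \<union> restr (E - EI) A2" by (simp only: FI FO2)
    also have "\<dots> = restr (EI \<union> (E - EI)) A2" by (rule restr_Un[symmetric])
    also have "\<dots> = restr E A2" by (simp only: EU[symmetric])
    also have "\<dots> = A2" using restr_orient_self[OF o2] by simp
    finally have "invert_seq (Xs @ Ys) A1 = A2"
      by (simp add: invert_seq_append F_def D_def)
    moreover have "\<forall>X\<in>set (Xs @ Ys). X \<subseteq> V \<and> card X \<le> p"
    proof
      fix X assume "X \<in> set (Xs @ Ys)"
      then have "X \<in> set Xs \<or> X \<in> set Ys" by simp
      then show "X \<subseteq> V \<and> card X \<le> p" using Xs(2) Ys(2) assms(4,6) by blast
    qed
    ultimately have "inv_dist p V A1 A2 \<le> length (Xs @ Ys)"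
      unfolding inv_dist_def by (intro Least_le) blast
    then show ?thesis using Xs(1) Ys(1) by simp
  qed
  obtain A0 where "orientation V E A0" using orient_exists[OF g] by blast
  then have ne: "{inv_dist p V A1 A2 | A1 A2. orientation V E A1 \<and> orientation V E A2} \<noteq> {}" by blast
  show ?thesis
    unfolding id_le_def[of p V E]
  proof (rule Max.boundedI[OF finite_vals[OF g] ne])
    fix a assume "a \<in> {inv_dist p V A1 A2 | A1 A2. orientation V E A1 \<and> orientation V E A2}"
    then obtain A1 A2 where a: "a = inv_dist p V A1 A2" and oo: "orientation V E A1" "orientation V E A2"
      by blast
    show "a \<le> id_le p VH EH + id_le p VI EI" unfolding a by (rule main[OF oo])
  qed
qed

end
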